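(* Let $U(0)\geqslant 1$ and $d\geqslant 1$ be integers, $U(n)=U(0)+nd$, and let $S(n)=\overline{U(0)U(1)\cdots U(n)}$ (right-concatenation), so $S(0)=U(0)$. Let $n\geqslant 0$ and put $$l=\left\lceil \log_{10}(n d + S(0) + 1)\right\rceil,\qquad t_l=\left\lfloor \frac{10^{l-1}-S(0)}{d}\right\rfloor .$$ Assume $t_l\geqslant 0$ and $U(t_l+2)<10^l$. Let $s_0=S(t_l)$, $s_1=S(t_l+1)$, $s_2=S(t_l+2)$ and $$\alpha_l=-\frac{(10^l-1)\,U(t_l)+d\cdot 10^l}{(10^l-1)^2},\qquad \mu_l=-\frac{d}{10^l-1},\qquad \theta_l=\frac{s_2-2 s_1+s_0}{(10^l-1)^2}.$$ Then $$S(n)=\alpha_l+\mu_l\,(n-t_l)+\theta_l\, 10^{l(n-t_l)}.$$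
   Context: For positive integers $a_0,\ldots,a_k$, $\overline{a_0a_1\cdots a_k}$ denotes the integer whose decimal expansion is the decimal expansion of $a_0$ followed by that of $a_1$, ..., followed by that of $a_k$. Note $l$ is the number of decimal digits of $U(n)$. *)

theory Defs
  imports Complex_Main
begin

text \<open>Number of decimal digits of a natural number (intended for positive arguments).\<close>
fun ndigits :: "nat \<Rightarrow> nat" where
  "ndigits m = (if m < 10 then 1 else Suc (ndigits (m div 10)))"

definition concat_dec :: "nat \<Rightarrow> nat \<Rightarrow> nat" where
  "concat_dec a b = a * 10 ^ ndigits b + b"

definition U :: "nat \<Rightarrow> nat \<Rightarrow> nat \<Rightarrow> nat" where
  "U u0 d n = u0 + n * d"

fun S :: "nat \<Rightarrow> nat \<Rightarrow> nat \<Rightarrow> nat" where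
  "S u0 d 0 = U u0 d 0"
| "S u0 d (Suc n) = concat_dec (S u0 d n) (U u0 d (Suc n))"

end

theory Submission imports Defs begin

lemma ndigits_eq: "10^(L-1) \<le> m \<Longrightarrow> m < 10^L \<Longrightarrow> L \<ge> 1 \<Longrightarrow> ndigits m = L"
proof (induction L arbitrary: m)
  case 0 then show ?case by simp
next
  case (Suc L)
  show ?case
  proof (cases L)
    case 0 then show ?thesis using Suc by simp
  next
    case (Suc K)
    have "m \<ge> 10" using Suc.prems \<open>L = Suc K\<close> by (simp add: order_trans[of 10 "10^Suc K"] )
    moreover have "ndigits (m div 10) = L" using Suc.IH Suc.prems \<open>L = Suc K\<close>
      by (auto simp: )
    ultimately show ?thesis by simp
  qed
qed

lemma alg_step:
  fixes X d u th :: real and k :: nat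
  assumes "X > 1"
  shows "(-((X-1)*u + d*X)/(X-1)^2) + (-d/(X-1))*(real k+1) + th*X^(Suc k)
       = X * ((-((X-1)*u + d*X)/(X-1)^2) + (-d/(X-1))*real k + th*X^k) + (u + (real k+1)*d)"
proof -
  obtain Y where Y: "X = Y + 1" "Y > 0" using assms by (metis add.commute diff_add_cancel diff_gt_0_iff_gt)
  then show ?thesis by (simp add: field_simps power2_eq_square)
qed

lemma alg_base:
  fixes X d u s0 :: real
  assumes "X > 1"
  shows "(-((X-1)*u + d*X)/(X-1)^2) + (-d/(X-1))*0 +
     (((X*(X*s0 + (u+d)) + (u+2*d)) - 2*(X*s0 + (u+d)) + s0)/(X-1)^2) * X^0 = s0"
proof -
  obtain Y where Y: "X = Y + 1" "Y > 0" using assms by (metis add.commute diff_add_cancel diff_gt_0_iff_gt)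
  then show ?thesis by (simp add: field_simps power2_eq_square)
qed
lemma U_mono: "d \<ge> 1 \<Longrightarrow> j < k \<Longrightarrow> U u0 d j < U u0 d k"
  by (simp add: U_def)

lemma U_le: "j \<le> k \<Longrightarrow> U u0 d j \<le> U u0 d k"
  by (simp add: U_def mult_le_mono1)

theorem theorem1:
  fixes u0 d n :: nat and l t :: int
  assumes "u0 \<ge> 1" and "d \<ge> 1"
  defines "l \<equiv> \<lceil>log 10 (real (n * d + S u0 d 0 + 1))\<rceil>"
  defines "t \<equiv> \<lfloor>((10::real) powi (l - 1) - real (S u0 d 0)) / real d\<rfloor>"
  assumes "t \<ge> 0"
  assumes "real (U u0 d (nat t + 2)) < (10::real) powi l"
  shows "real (S u0 d n) =
     - ((10 powi l - 1) * real (U u0 d (nat t)) + real d * 10 powi l) / (10 powi l - 1)^2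
     + (- real d / (10 powi l - 1)) * (real n - real_of_int t)
     + ((real (S u0 d (nat t + 2)) - 2 * real (S u0 d (nat t + 1)) + real (S u0 d (nat t)))
          / (10 powi l - 1)^2) * (10::real) powi (l * (int n - t))"
proof -
  note dpos = assms(2)
  define x where "x = log 10 (real (U u0 d n + 1))"
  have S0: "S u0 d 0 = u0" by (simp add: U_def)
  have lx: "l = \<lceil>x\<rceil>" unfolding l_def x_def S0 by (simp add: U_def add.commute)
  have Un1: "U u0 d n \<ge> 1" using assms(1) by (simp add: U_def)
  have xpos: "x > 0" unfolding x_def using Un1 by simp
  have xc: "of_int l - 1 < x" "x \<le> of_int l" unfolding lx by (simp_all add: ceiling_correct)
  have l1: "l \<ge> 1" using xpos xc by linarith
  define L where "L = nat l"
  have lL: "l = int L" "L \<ge> 1" using l1 by (simp_all add: L_def)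
  have lm1: "real_of_int (l - 1) = real (L - 1)" using lL by simp
  have b1: "10 powr real (L-1) < real (U u0 d n + 1)"
    using xc(1) unfolding x_def by (subst less_log_iff[symmetric]) (use lm1 in auto)
  have b2: "real (U u0 d n + 1) \<le> 10 powr real L"
    using xc(2) unfolding x_def lL by (subst log_le_iff[symmetric]) auto
  have b1': "10^(L-1) < U u0 d n + 1"
  proof -
    have "real (10^(L-1)) < real (U u0 d n + 1)" using b1 by (simp add: powr_realpow)
    then show ?thesis by linarith
  qed
  have b2': "U u0 d n + 1 \<le> 10^L"
  proof -
    have "real (U u0 d n + 1) \<le> real (10^L)" using b2 by (simp add: powr_realpow)
    then show ?thesis by linarith
  qed
  define T where "T = nat t"
  have tT: "t = int T" using assms(5) T_def by simp
  define y where "y = ((10::real) powi (l - 1) - real u0) / real d"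
  have ty: "t = \<lfloor>y\<rfloor>" unfolding t_def y_def S0 by simp
  have yv: "y = (real (10^(L-1)) - real u0) / real d"
    unfolding y_def using lL by (simp add: power_int_of_nat[symmetric])
  have ty1: "real T \<le> y" "y < real T + 1" using ty tT by linarith+
  have dr: "real d > 0" using dpos by simp
  have UT: "U u0 d T \<le> 10^(L-1)"
  proof -
    have "real T * real d \<le> real (10^(L-1)) - real u0" using ty1(1) dr unfolding yv
      by (simp add: pos_le_divide_eq)
    then have "real (U u0 d T) \<le> real (10^(L-1))" by (simp add: U_def)
    then show ?thesis by linarith
  qed
  have UT1: "10^(L-1) < U u0 d (T+1)"
  proof -
    have "real (10^(L-1)) - real u0 < (real T + 1) * real d" using ty1(2) dr unfolding yv
      by (simp add: divide_less_eq)
    then have "real (10^(L-1)) < real (U u0 d (T+1))" by (simp add: U_def algebra_simps)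
    then show ?thesis by linarith
  qed
  have UT2: "U u0 d (T+2) < 10^L"
  proof -
    have "real (U u0 d (T+2)) < real (10^L)" using assms(6) unfolding T_def[symmetric] lL
      by (simp add: power_int_of_nat)
    then show ?thesis by linarith
  qed
  have Tn: "T \<le> n"
  proof (rule ccontr)
    assume "\<not> T \<le> n"
    then have "U u0 d n < U u0 d T" using U_mono dpos by simp
    then show False using UT b1' by linarith
  qed
  define N where "N = max n (T+2)"
  have digs: "ndigits (U u0 d k) = L" if "T < k" "k \<le> N" for k
  proof (rule ndigits_eq)
    show "L \<ge> 1" by (rule lL(2))
    have "U u0 d (T+1) \<le> U u0 d k" using that U_le[of "T+1" k] by simp
    then show "10^(L-1) \<le> U u0 d k" using UT1 by linarith
    show "U u0 d k < 10^L"
    proof (cases "k \<le> n")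
      case True
      then have "U u0 d k \<le> U u0 d n" using U_le[of k n] by simp
      then show ?thesis using b2' by linarith
    next
      case False
      then have "k \<le> T+2" using that N_def by auto
      then have "U u0 d k \<le> U u0 d (T+2)" using U_le[of k "T+2"] by simp
      then show ?thesis using UT2 by linarith
    qed
  qed
  define X where "X = (10::real)^L"
  have X1: "X > 1" unfolding X_def using lL(2) by simp
  have rec: "real (S u0 d (Suc k)) = X * real (S u0 d k) + real (U u0 d (Suc k))"
    if "T \<le> k" "Suc k \<le> N" for k
  proof -
    have "ndigits (U u0 d (Suc k)) = L" using digs that by simp
    then show ?thesis by (simp add: concat_dec_def X_def)
  qed
  define u where "u = real (U u0 d T)"
  define s0 where "s0 = real (S u0 d T)"
  define A where "A = -((X-1)*u + real d*X)/(X-1)^2"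
  define th where "th = (real (S u0 d (T + 2)) - 2 * real (S u0 d (T + 1)) + real (S u0 d T)) / (X-1)^2"
  have Uk: "real (U u0 d (T + Suc m)) = u + (real m + 1) * real d" for m
    unfolding u_def by (simp add: U_def algebra_simps)
  have main: "T + m \<le> N \<Longrightarrow> real (S u0 d (T+m)) = A + (- real d/(X-1)) * real m + th * X^m" for m
  proof (induction m)
    case 0
    have s1: "real (S u0 d (T+1)) = X*s0 + (u + real d)"
      using rec[of T] Uk[of 0] unfolding s0_def N_def by simp
    have s2: "real (S u0 d (T+2)) = X*(X*s0 + (u + real d)) + (u + 2*real d)"
      using rec[of "T+1"] Uk[of 1] s1 unfolding N_def by simp
    show ?case using alg_base[OF X1, of u "real d" s0] unfolding A_def th_def s1 s2
      by (simp add: s0_def)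
  next
    case (Suc m)
    have "real (S u0 d (T + Suc m)) = X * real (S u0 d (T+m)) + real (U u0 d (T + Suc m))"
      using rec[of "T+m"] Suc.prems by simp
    also have "\<dots> = X * (A + (- real d/(X-1)) * real m + th * X^m) + (u + (real m + 1) * real d)"
      using Suc Uk[of m] by simp
    also have "\<dots> = A + (- real d/(X-1)) * real (Suc m) + th * X^(Suc m)"
      using alg_step[OF X1, where d="real d" and u=u and k=m and th=th] unfolding A_def by (simp add: add.commute)
    finally show ?case .
  qed
  have nT: "n = T + (n - T)" using Tn by simp
  have fin: "real (S u0 d n) = A + (- real d/(X-1)) * real (n - T) + th * X^(n - T)"
    using main[of "n - T"] Tn N_def by simp
  have p1: "(10::real) powi l = X" unfolding X_def lL by (simp add: power_int_of_nat)
  have p2: "(10::real) powi (l * (int n - t)) = X^(n-T)"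
  proof -
    have "l * (int n - t) = int (L * (n - T))" using lL tT Tn by (simp add: of_nat_diff)
    then have "(10::real) powi (l * (int n - t)) = 10 ^ (L * (n - T))"
      by (metis power_int_of_nat)
    then show ?thesis unfolding X_def by (simp add: power_mult)
  qed
  have p3: "real n - real_of_int t = real (n - T)" using tT Tn by simp
  show ?thesis unfolding p1 p2 p3 fin A_def th_def u_def T_def[symmetric] by simp
qed

end
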